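(* For integers $t\ge 3$ and $m\ge 2$, let $B^t_m$ be the graph consisting of $m$ copies of the cycle $C_t$ glued together along a single common edge (the copies otherwise disjoint). Then $B^t_m$ is complement critical if and only if $t=3$ or $t=4$.
   Context: All graphs are finite and simple with nonempty vertex set; $\overline{G}$ denotes the complement of $G$. An orthogonal vector representation of a graph $G=(V,E)$ in $\mathbb{R}^d$ is a map $\phi:V\to\mathbb{R}^d$ with $\phi(v)\neq 0$ for all $v$, and for distinct $u,v$: $\langle\phi(u),\phi(v)\rangle=0$ if and only if $uv\notin E$. ${\rm mvr}(G)$ is the smallest $d$ for which such a representation exists. $G$ is complement critical if ${\rm mvr}(H)+{\rm mvr}(\overline{H})<{\rm mvr}(G)+{\rm mvr}(\overline{G})$ for every proper induced subgraph $H$ of $G$ (with nonempty vertex set). *)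

theory Defs
  imports Complex_Main
begin

type_synonym 'a graph = "'a set \<times> 'a set set"

definition verts :: "'a graph \<Rightarrow> 'a set" where "verts G = fst G"
definition edges :: "'a graph \<Rightarrow> 'a set set" where "edges G = snd G"

definition simple_graph :: "'a graph \<Rightarrow> bool" where
  "simple_graph G \<longleftrightarrow> finite (verts G) \<and> verts G \<noteq> {} \<and>
     (\<forall>e\<in>edges G. \<exists>u v. u \<in> verts G \<and> v \<in> verts G \<and> u \<noteq> v \<and> e = {u, v})"

definition adj :: "'a graph \<Rightarrow> 'a \<Rightarrow> 'a \<Rightarrow> bool" where
  "adj G u v \<longleftrightarrow> {u, v} \<in> edges G"

definition compl_graph :: "'a graph \<Rightarrow> 'a graph" where
  "compl_graph G = (verts G,
     {{u, v} | u v. u \<in> verts G \<and> v \<in> verts G \<and> u \<noteq> v \<and> {u, v} \<notin> edges G})"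

definition induced :: "'a graph \<Rightarrow> 'a set \<Rightarrow> 'a graph" where
  "induced G S = (S, {e \<in> edges G. e \<subseteq> S})"

text \<open>Vectors of R^d are represented as functions nat => real, of which only the
  coordinates 0..d-1 are used.\<close>
definition inner_d :: "nat \<Rightarrow> (nat \<Rightarrow> real) \<Rightarrow> (nat \<Rightarrow> real) \<Rightarrow> real" where
  "inner_d d x y = (\<Sum>i<d. x i * y i)"

definition orth_rep :: "'a graph \<Rightarrow> nat \<Rightarrow> ('a \<Rightarrow> nat \<Rightarrow> real) \<Rightarrow> bool" where
  "orth_rep G d \<phi> \<longleftrightarrow>
     (\<forall>v\<in>verts G. \<exists>i<d. \<phi> v i \<noteq> 0) \<and>
     (\<forall>u\<in>verts G. \<forall>v\<in>verts G. u \<noteq> v \<longrightarrow>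
        (inner_d d (\<phi> u) (\<phi> v) = 0 \<longleftrightarrow> \<not> adj G u v))"

definition mvr :: "'a graph \<Rightarrow> nat" where
  "mvr G = (LEAST d. \<exists>\<phi>. orth_rep G d \<phi>)"

definition complement_critical :: "'a graph \<Rightarrow> bool" where
  "complement_critical G \<longleftrightarrow>
     (\<forall>S. S \<noteq> {} \<and> S \<subset> verts G \<longrightarrow>
        mvr (induced G S) + mvr (compl_graph (induced G S)) < mvr G + mvr (compl_graph G))"

text \<open>The book graph B^t_m: m copies of C_t glued along a common edge {a,b},
  a = Inl 0, b = Inl 1.  Copy j (j < m) has internal vertices Inr (j,i), i < t-2,
  forming the path a - (j,0) - (j,1) - ... - (j,t-3) - b.\<close>
definition book_graph :: "nat \<Rightarrow> nat \<Rightarrow> (nat + nat \<times> nat) graph" where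
  "book_graph t m =
    ({Inl 0, Inl 1} \<union> {Inr (j, i) | j i. j < m \<and> i < t - 2},
     {{Inl 0, Inl 1}}
     \<union> {{Inl 0, Inr (j, 0)} | j. j < m}
     \<union> {{Inr (j, i), Inr (j, i + 1)} | j i. j < m \<and> i + 1 < t - 2}
     \<union> {{Inr (j, t - 3), Inl 1} | j. j < m})"

end

theory Submission
  imports Defs "HOL-Library.Function_Algebras"
begin


definition orep :: "'a set \<Rightarrow> ('a \<Rightarrow> 'a \<Rightarrow> bool) \<Rightarrow> nat \<Rightarrow> ('a \<Rightarrow> nat \<Rightarrow> real) \<Rightarrow> bool" where
  "orep S A d \<phi> \<longleftrightarrow> (\<forall>v\<in>S. \<exists>i<d. \<phi> v i \<noteq> 0) \<and>
     (\<forall>u\<in>S. \<forall>v\<in>S. u \<noteq> v \<longrightarrow> (inner_d d (\<phi> u) (\<phi> v) = 0 \<longleftrightarrow> \<not> A u v))"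

definition mv :: "'a set \<Rightarrow> ('a \<Rightarrow> 'a \<Rightarrow> bool) \<Rightarrow> nat" where
  "mv S A = (LEAST d. \<exists>\<phi>. orep S A d \<phi>)"

lemma mv_le: "orep S A d \<phi> \<Longrightarrow> mv S A \<le> d"
  unfolding mv_def by (rule Least_le) blast

lemma orep_mono: "orep S A d \<phi> \<Longrightarrow> T \<subseteq> S \<Longrightarrow> orep T A d \<phi>"
  unfolding orep_def by blast

lemma mv_ex: "orep S A d \<phi> \<Longrightarrow> \<exists>\<psi>. orep S A (mv S A) \<psi>"
  unfolding mv_def by (rule LeastI) blast

lemma mv_mono: "orep S A d \<phi> \<Longrightarrow> T \<subseteq> S \<Longrightarrow> mv T A \<le> mv S A"
  using mv_ex mv_le orep_mono by metis

lemma mv_lower: "orep S A d \<phi> \<Longrightarrow> (\<And>d \<psi>. orep S A d \<psi> \<Longrightarrow> k \<le> d) \<Longrightarrow> k \<le> mv S A"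
  using mv_ex by metis

lemma orep_embed:
  assumes "orep S' A' d \<phi>" "inj_on f S" "f ` S \<subseteq> S'" "\<And>u v. u \<in> S \<Longrightarrow> v \<in> S \<Longrightarrow> A' (f u) (f v) = A u v"
  shows "orep S A d (\<phi> \<circ> f)"
  unfolding orep_def
proof (intro conjI ballI impI)
  fix v assume "v \<in> S" then show "\<exists>i<d. (\<phi> \<circ> f) v i \<noteq> 0" using assms(1,3) unfolding orep_def by auto
next
  fix u v assume uv: "u \<in> S" "v \<in> S" "u \<noteq> v"
  then have "f u \<noteq> f v" "f u \<in> S'" "f v \<in> S'" using assms(2,3) unfolding inj_on_def by auto
  then show "(inner_d d ((\<phi> \<circ> f) u) ((\<phi> \<circ> f) v) = 0) = (\<not> A u v)"
    using assms(1) assms(4)[OF uv(1,2)] unfolding orep_def by simp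
qed

lemma orth_rep_induced: "orth_rep (induced G S) d \<phi> \<longleftrightarrow> orep S (adj G) d \<phi>"
  unfolding orth_rep_def orep_def induced_def verts_def edges_def adj_def by auto

lemma orth_rep_compl_induced: "orth_rep (compl_graph (induced G S)) d \<phi> \<longleftrightarrow> orep S (\<lambda>u v. \<not> adj G u v) d \<phi>"
proof -
  have "adj (compl_graph (induced G S)) u v \<longleftrightarrow> \<not> adj G u v" if "u \<in> S" "v \<in> S" "u \<noteq> v" for u v
  proof
    assume "adj (compl_graph (induced G S)) u v"
    then obtain u' v' where "{u,v} = {u',v'}" "{u',v'} \<notin> {e \<in> snd G. e \<subseteq> S}"
      unfolding adj_def compl_graph_def induced_def verts_def edges_def by auto
    then show "\<not> adj G u v" using that unfolding adj_def edges_def by auto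
  next
    assume "\<not> adj G u v" then show "adj (compl_graph (induced G S)) u v"
      using that unfolding adj_def compl_graph_def induced_def verts_def edges_def by auto
  qed
  moreover have "verts (compl_graph (induced G S)) = S" unfolding compl_graph_def induced_def verts_def by simp
  ultimately show ?thesis unfolding orth_rep_def orep_def by auto
qed

lemma induced_self: "simple_graph G \<Longrightarrow> induced G (verts G) = G"
  unfolding simple_graph_def induced_def verts_def edges_def by (cases G) auto

lemma cc_iff:
  assumes "simple_graph G"
  shows "complement_critical G \<longleftrightarrow> (\<forall>S. S \<noteq> {} \<and> S \<subset> verts G \<longrightarrow>
     mv S (adj G) + mv S (\<lambda>u v. \<not> adj G u v) < mv (verts G) (adj G) + mv (verts G) (\<lambda>u v. \<not> adj G u v))"
proof -
  have e: "mvr (induced G S) = mv S (adj G)" "mvr (compl_graph (induced G S)) = mv S (\<lambda>u v. \<not> adj G u v)" for S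
    unfolding mvr_def mv_def orth_rep_induced orth_rep_compl_induced by simp_all
  show ?thesis unfolding complement_critical_def
    using e[of "verts G"] e induced_self[OF assms] by metis
qed


type_synonym bv = "nat + nat \<times> nat"

definition badj :: "nat \<Rightarrow> nat \<Rightarrow> bv \<Rightarrow> bv \<Rightarrow> bool" where
  "badj t m u v \<longleftrightarrow> (u = Inl 0 \<and> v = Inl 1) \<or> (u = Inl 1 \<and> v = Inl 0) \<or>
    (\<exists>j<m. (u = Inl 0 \<and> v = Inr (j,0)) \<or> (v = Inl 0 \<and> u = Inr (j,0)) \<or>
       (u = Inl 1 \<and> v = Inr (j,t-3)) \<or> (v = Inl 1 \<and> u = Inr (j,t-3)) \<or>
       (\<exists>i. i+1 < t-2 \<and> ((u = Inr (j,i) \<and> v = Inr (j,i+1)) \<or> (v = Inr (j,i) \<and> u = Inr (j,i+1)))))"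

lemma badj_simps[simp]:
  "badj t m (Inl p) (Inl q) \<longleftrightarrow> (p = 0 \<and> q = 1 \<or> p = 1 \<and> q = 0)"
  "badj t m (Inl p) (Inr (j,i)) \<longleftrightarrow> j < m \<and> (p = 0 \<and> i = 0 \<or> p = 1 \<and> i = t-3)"
  "badj t m (Inr (j,i)) (Inl p) \<longleftrightarrow> j < m \<and> (p = 0 \<and> i = 0 \<or> p = 1 \<and> i = t-3)"
  "badj t m (Inr (j,i)) (Inr (j',i')) \<longleftrightarrow> j < m \<and> j' = j \<and> (i' = i+1 \<and> i+1 < t-2 \<or> i = i'+1 \<and> i'+1 < t-2)"
  unfolding badj_def by auto

lemma badj_sym: "badj t m u v = badj t m v u"
  unfolding badj_def by blast

definition bV :: "nat \<Rightarrow> nat \<Rightarrow> bv set" where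
  "bV t m = {Inl 0, Inl 1} \<union> Inr ` ({..<m} \<times> {..<t-2})"

lemma bV_mem[simp]:
  "Inl p \<in> bV t m \<longleftrightarrow> p = 0 \<or> p = 1"
  "Inr (j,i) \<in> bV t m \<longleftrightarrow> j < m \<and> i < t - 2"
  unfolding bV_def by auto

lemma book_verts: "verts (book_graph t m) = bV t m"
  unfolding book_graph_def verts_def bV_def by auto

lemma book_adj: "adj (book_graph t m) u v = badj t m u v"
proof
  assume "adj (book_graph t m) u v"
  then have "{u,v} \<in> {{Inl 0, Inl 1}}
     \<union> {{Inl 0, Inr (j, 0)} | j. j < m}
     \<union> {{Inr (j, i), Inr (j, i + 1)} | j i. j < m \<and> i + 1 < t - 2}
     \<union> {{Inr (j, t - 3), Inl 1} | j. j < m}" unfolding adj_def book_graph_def edges_def by simp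
  then consider "{u,v} = {Inl 0, Inl 1}" | j where "j < m" "{u,v} = {Inl 0, Inr (j, 0)}"
    | j i where "j < m" "i + 1 < t - 2" "{u,v} = {Inr (j, i), Inr (j, i + 1)}"
    | j where "j < m" "{u,v} = {Inr (j, t - 3), Inl 1}" by blast
  then show "badj t m u v"
  proof cases
    case 1 then show ?thesis unfolding doubleton_eq_iff by auto
  next
    case (2 j) then show ?thesis unfolding doubleton_eq_iff by auto
  next
    case (3 j i) then show ?thesis unfolding doubleton_eq_iff by auto
  next
    case (4 j) then show ?thesis unfolding doubleton_eq_iff by auto
  qed
next
  assume "badj t m u v"
  have E: "edges (book_graph t m) = {{Inl 0, Inl 1}}
     \<union> {{Inl 0, Inr (j, 0)} | j. j < m}
     \<union> {{Inr (j, i), Inr (j, i + 1)} | j i. j < m \<and> i + 1 < t - 2}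
     \<union> {{Inr (j, t - 3), Inl 1} | j. j < m}" unfolding book_graph_def edges_def by simp
  from \<open>badj t m u v\<close> consider "{u,v} = {Inl 0, Inl 1}" | j where "j < m" "{u,v} = {Inl 0, Inr (j, 0)}"
    | j i where "j < m" "i + 1 < t - 2" "{u,v} = {Inr (j, i), Inr (j, i + 1)}"
    | j where "j < m" "{u,v} = {Inr (j, t - 3), Inl 1}"
  proof -
    assume h1: "{u,v} = {Inl 0, Inl 1} \<Longrightarrow> thesis"
      and h2: "\<And>j. j < m \<Longrightarrow> {u,v} = {Inl 0, Inr (j, 0)} \<Longrightarrow> thesis"
      and h3: "\<And>j i. j < m \<Longrightarrow> i + 1 < t - 2 \<Longrightarrow> {u,v} = {Inr (j, i), Inr (j, i + 1)} \<Longrightarrow> thesis"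
      and h4: "\<And>j. j < m \<Longrightarrow> {u,v} = {Inr (j, t - 3), Inl 1} \<Longrightarrow> thesis"
    from \<open>badj t m u v\<close> show thesis unfolding badj_def
    proof (elim disjE exE conjE)
      show ?thesis if "u = Inl 0" "v = Inl 1" using h1 that by simp
      show ?thesis if "u = Inl 1" "v = Inl 0" using h1 that by (simp add: insert_commute)
      fix j assume j: "j < m"
      show ?thesis if "u = Inl 0" "v = Inr (j,0)" using h2 that j by simp
      show ?thesis if "v = Inl 0" "u = Inr (j,0)" using h2 that j by (simp add: insert_commute)
      show ?thesis if "v = Inl 1" "u = Inr (j,t-3)" using h4 that j by simp
      show ?thesis if "u = Inl 1" "v = Inr (j,t-3)" using h4 that j by (simp add: insert_commute)
      fix i assume i: "i + 1 < t - 2"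
      show ?thesis if "u = Inr (j,i)" "v = Inr (j,i+1)" using h3 that j i by simp
      show ?thesis if "v = Inr (j,i)" "u = Inr (j,i+1)" using h3 that j i by (simp add: insert_commute)
    qed
  qed
  then show "adj (book_graph t m) u v"
  proof cases
    case 1 then show ?thesis unfolding adj_def E by simp
  next
    case (2 j) then show ?thesis unfolding adj_def E by blast
  next
    case (3 j i) then show ?thesis unfolding adj_def E by blast
  next
    case (4 j) then show ?thesis unfolding adj_def E by blast
  qed
qed

lemma book_simple: assumes "t \<ge> 3" shows "simple_graph (book_graph t m)"
  unfolding simple_graph_def book_verts
proof (intro conjI ballI)
  show "finite (bV t m)" unfolding bV_def by auto
  show "bV t m \<noteq> {}" unfolding bV_def by auto
  fix e assume "e \<in> edges (book_graph t m)"
  then show "\<exists>u v. u \<in> bV t m \<and> v \<in> bV t m \<and> u \<noteq> v \<and> e = {u, v}"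
  proof -
    have m1: "Inr (j,0) \<in> bV t m" "Inr (j,t-3) \<in> bV t m" if "j < m" for j using that assms by auto
    have m2: "Inr (j,i) \<in> bV t m" "Inr (j,i+1) \<in> bV t m" if "j < m" "i+1 < t-2" for j i using that by auto
    from \<open>e \<in> edges (book_graph t m)\<close> consider "e = {Inl 0, Inl 1}" | j where "j < m" "e = {Inl 0, Inr (j, 0)}"
    | j i where "j < m" "i + 1 < t - 2" "e = {Inr (j, i), Inr (j, i + 1)}"
    | j where "j < m" "e = {Inr (j, t - 3), Inl 1}" unfolding book_graph_def edges_def by auto
    then show ?thesis
    proof cases
      case 1 then show ?thesis by (intro exI[of _ "Inl 0"] exI[of _ "Inl 1"]) simp
    next
      case (2 j) then show ?thesis using m1[OF 2(1)] by (intro exI[of _ "Inl 0"] exI[of _ "Inr (j,0)"]) simp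
    next
      case (3 j i) then show ?thesis using m2[OF 3(1,2)] by (intro exI[of _ "Inr (j,i)"] exI[of _ "Inr (j,i+1)"]) simp
    next
      case (4 j) then show ?thesis using m1[OF 4(1)] by (intro exI[of _ "Inr (j,t-3)"] exI[of _ "Inl 1"]) simp
    qed
  qed
qed


definition sc :: "real \<Rightarrow> (nat \<Rightarrow> real) \<Rightarrow> (nat \<Rightarrow> real)" where
  "sc c x = (\<lambda>j. c * x j)"

interpretation fv: vector_space sc
  by unfold_locales (auto simp: sc_def fun_eq_iff algebra_simps)

definition trunc :: "nat \<Rightarrow> (nat \<Rightarrow> real) \<Rightarrow> (nat \<Rightarrow> real)" where
  "trunc d x = (\<lambda>j. if j < d then x j else 0)"

lemma inner_trunc1: "inner_d d (trunc d x) y = inner_d d x y"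
  unfolding inner_d_def trunc_def by simp
lemma inner_trunc2: "inner_d d x (trunc d y) = inner_d d x y"
  unfolding inner_d_def trunc_def by simp
lemma inner_sym: "inner_d d x y = inner_d d y x"
  unfolding inner_d_def by (simp add: mult.commute)

lemma inner_step: "inner_d d w (sc c x + y) = c * inner_d d w x + inner_d d w y"
  unfolding inner_d_def sc_def plus_fun_def by (simp add: sum.distrib sum_distrib_left algebra_simps)
lemma inner_zero: "inner_d d w 0 = 0"
  unfolding inner_d_def by simp

lemma span_orth: assumes "\<forall>s\<in>X. inner_d d w s = 0" "x \<in> fv.span X" shows "inner_d d w x = 0"
  using assms(2)
proof (induct rule: fv.span_induct_alt)
  case base show ?case by (rule inner_zero)
next
  case (step c x y) then show ?case using assms(1) by (simp only: inner_step)
qed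

lemma span_orth2: assumes "\<forall>x\<in>X. \<forall>y\<in>Y. inner_d d x y = 0" "x \<in> fv.span X" "y \<in> fv.span Y"
  shows "inner_d d x y = 0"
proof -
  have "\<forall>s\<in>X. inner_d d y s = 0" using assms(1,3) span_orth inner_sym by metis
  then show ?thesis using span_orth assms(2) inner_sym by metis
qed

lemma span_tail: assumes "\<forall>s\<in>X. \<forall>j\<ge>d. s j = 0" "x \<in> fv.span X" shows "\<forall>j\<ge>d. x j = 0"
  using assms(2) by (induct rule: fv.span_induct_alt) (use assms(1) in \<open>auto simp: sc_def\<close>)

lemma inner_self_zero: assumes "\<forall>j\<ge>d. x j = 0" "inner_d d x x = 0" shows "x = 0"
proof -
  have "\<forall>j<d. x j * x j = 0" using assms(2) unfolding inner_d_def
    by (subst (asm) sum_nonneg_eq_0_iff) auto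
  show ?thesis
  proof
    fix j show "x j = 0 j"
    proof (cases "j < d")
      case True then show ?thesis using \<open>\<forall>j<d. x j * x j = 0\<close> by simp
    next
      case False then show ?thesis using assms(1) by simp
    qed
  qed
qed

definition ev :: "nat \<Rightarrow> nat \<Rightarrow> real" where "ev i = (\<lambda>j. if j = i then 1 else 0)"

lemma tail_in_span: assumes "\<forall>j\<ge>d. x j = 0" shows "x \<in> fv.span (ev ` {..<d})"
proof -
  have "x = (\<Sum>i<d. sc (x i) (ev i))"
  proof
    fix j
    have "(\<Sum>i<d. sc (x i) (ev i)) j = (\<Sum>i<d. sc (x i) (ev i) j)"
      by (induct d) (auto simp: plus_fun_def)
    also have "\<dots> = (\<Sum>i<d. if i = j then x j else 0)" by (rule sum.cong) (auto simp: sc_def ev_def)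
    also have "\<dots> = x j" using assms by (cases "j < d") auto
    finally show "x j = (\<Sum>i<d. sc (x i) (ev i)) j" by simp
  qed
  also have "\<dots> \<in> fv.span (ev ` {..<d})"
    by (intro fv.span_sum fv.span_scale fv.span_base) auto
  finally show ?thesis .
qed

lemma la_bound:
  fixes u :: "nat \<Rightarrow> nat \<Rightarrow> real"
  assumes tail: "\<forall>i<k. \<forall>j\<ge>d. u i j = 0"
    and ns: "\<forall>i<k. u i \<notin> fv.span (u ` {..<i})"
  shows "k \<le> d"
proof -
  have ind: "fv.independent (u ` {..<k'})" if "k' \<le> k" for k'
    using that
  proof (induct k')
    case 0 then show ?case by (simp add: fv.independent_empty)
  next
    case (Suc k')
    have "u ` {..<Suc k'} = insert (u k') (u ` {..<k'})" by (auto simp: lessThan_Suc)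
    then show ?case using Suc ns fv.independent_insertI by auto
  qed
  have inj: "inj_on u {..<k}"
  proof (rule inj_onI)
    fix i j assume ij: "i \<in> {..<k}" "j \<in> {..<k}" "u i = u j"
    show "i = j"
    proof (rule ccontr)
      assume "i \<noteq> j"
      then consider "i < j" | "j < i" by linarith
      then show False
      proof cases
        case 1 then have "u j \<in> fv.span (u ` {..<j})" using ij by (intro fv.span_base image_eqI[of _ u i]) auto
        then show False using ns ij by auto
      next
        case 2 then have "u i \<in> fv.span (u ` {..<i})" using ij by (intro fv.span_base image_eqI[of _ u j]) auto
        then show False using ns ij by auto
      qed
    qed
  qed
  have sub: "u ` {..<k} \<subseteq> fv.span (ev ` {..<d})" using tail tail_in_span by auto
  have "card (u ` {..<k}) \<le> card (ev ` {..<d})"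
    using fv.independent_span_bound[OF _ ind[OF order_refl] sub] by auto
  also have "\<dots> \<le> d" using card_image_le[of "{..<d}" ev] by simp
  finally show ?thesis using card_image[OF inj] by simp
qed

lemma os_groups:
  assumes rep: "orep S A d \<phi>"
    and vS: "\<forall>i<k. v i \<in> S"
    and H1: "\<forall>i<k. \<forall>j<i. g j = g i \<longrightarrow> inner_d d (w i) (\<phi> (v j)) = 0"
    and H2: "\<forall>i<k. inner_d d (w i) (\<phi> (v i)) \<noteq> 0"
    and H3: "\<forall>i<k. \<forall>j<k. g i \<noteq> g j \<longrightarrow> v i \<noteq> v j \<and> \<not> A (v i) (v j)"
  shows "k \<le> d"
proof -
  define u where "u i = trunc d (\<phi> (v i))" for i
  have tl: "\<forall>j\<ge>d. u i j = 0" for i unfolding u_def trunc_def by simp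
  have orth: "inner_d d (u i) (u j) = 0" if "i < k" "j < k" "g i \<noteq> g j" for i j
  proof -
    have "v i \<noteq> v j" "\<not> A (v i) (v j)" using H3 that by auto
    then have "inner_d d (\<phi> (v i)) (\<phi> (v j)) = 0" using rep vS that unfolding orep_def by auto
    then show ?thesis unfolding u_def inner_trunc1 inner_trunc2 .
  qed
  have "\<forall>i<k. u i \<notin> fv.span (u ` {..<i})"
  proof (intro allI impI notI)
    fix i assume ik: "i < k" and sp: "u i \<in> fv.span (u ` {..<i})"
    define X where "X = u ` {j. j < i \<and> g j = g i}"
    define Y where "Y = u ` {j. j < i \<and> g j \<noteq> g i}"
    have "u ` {..<i} = X \<union> Y" unfolding X_def Y_def by auto
    with sp have "u i \<in> fv.span (X \<union> Y)" by simp
    then obtain x y where xy: "u i = x + y" "x \<in> fv.span X" "y \<in> fv.span Y"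
      unfolding fv.span_Un by blast
    define z where "z = u i - x"
    have zy: "z = y" unfolding z_def xy by simp
    have s1: "u i \<in> fv.span (insert (u i) X)" by (rule fv.span_base) simp
    have s2: "x \<in> fv.span (insert (u i) X)" using xy(2) fv.span_mono[of X "insert (u i) X"] by blast
    have zsp: "z \<in> fv.span (insert (u i) X)" unfolding z_def using fv.span_diff[OF s1 s2] .
    have "\<forall>a\<in>insert (u i) X. \<forall>b\<in>Y. inner_d d a b = 0"
      unfolding X_def Y_def using orth ik by auto
    then have "inner_d d z y = 0" using span_orth2 zsp xy(3) by blast
    then have "inner_d d z z = 0" using zy by simp
    moreover have "\<forall>j\<ge>d. z j = 0" using span_tail[of Y d y] tl xy(3) zy unfolding Y_def by auto
    ultimately have "z = 0" using inner_self_zero by blast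
    then have "u i = x" unfolding z_def by simp
    then have "u i \<in> fv.span X" using xy(2) by simp
    moreover have "\<forall>s\<in>X. inner_d d (w i) s = 0" unfolding X_def u_def using H1 ik by (auto simp: inner_trunc2)
    ultimately have "inner_d d (w i) (u i) = 0" using span_orth by blast
    then show False using H2 ik unfolding u_def inner_trunc2 by auto
  qed
  then show ?thesis using la_bound tl by blast
qed


lemma orep_zero: "orep S A d \<phi> \<Longrightarrow> u \<in> S \<Longrightarrow> v \<in> S \<Longrightarrow> u \<noteq> v \<Longrightarrow> \<not> A u v \<Longrightarrow> inner_d d (\<phi> u) (\<phi> v) = 0"
  unfolding orep_def by blast
lemma orep_nz: "orep S A d \<phi> \<Longrightarrow> u \<in> S \<Longrightarrow> v \<in> S \<Longrightarrow> u \<noteq> v \<Longrightarrow> A u v \<Longrightarrow> inner_d d (\<phi> u) (\<phi> v) \<noteq> 0"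
  unfolding orep_def by blast
lemma orep_self: assumes "orep S A d \<phi>" "u \<in> S" shows "inner_d d (\<phi> u) (\<phi> u) \<noteq> 0"
proof -
  obtain i where i: "i < d" "\<phi> u i \<noteq> 0" using assms unfolding orep_def by blast
  have "0 < \<phi> u i * \<phi> u i" by (metis i(2) mult_neg_neg mult_pos_pos linorder_neqE_linordered_idom)
  also have "\<dots> \<le> inner_d d (\<phi> u) (\<phi> u)" unfolding inner_d_def
    using i by (intro member_le_sum) auto
  finally show ?thesis by simp
qed

lemma all_less_3: "(\<forall>i<(3::nat). P i) \<longleftrightarrow> P 0 \<and> P 1 \<and> P 2"
  by (auto simp: numeral_eq_Suc less_Suc_eq)
lemma all_less_4: "(\<forall>i<(4::nat). P i) \<longleftrightarrow> P 0 \<and> P 1 \<and> P 2 \<and> P 3"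
  by (auto simp: numeral_eq_Suc less_Suc_eq)
lemma all_less_1: "(\<forall>i<(1::nat). P i) \<longleftrightarrow> P 0" by auto
lemma all_less_2: "(\<forall>i<(2::nat). P i) \<longleftrightarrow> P 0 \<and> P 1" by (auto simp: numeral_eq_Suc less_Suc_eq)

lemma lb_spider:
  assumes t: "t \<ge> 3" and rep: "orep S (badj t m) d \<phi>" and sub: "bV t m - {Inl 0} \<subseteq> S"
  shows "m * (t - 2) \<le> d"
proof -
  define n where "n = t - 2"
  have n: "n \<ge> 1" "t - 3 = n - 1" using t unfolding n_def by auto
  define v :: "nat \<Rightarrow> bv" where "v i = Inr (i div n, i mod n)" for i :: nat
  define g where "g i = i div n" for i :: nat
  define w where "w i = (if i mod n < n - 1 then \<phi> (Inr (i div n, i mod n + 1)) else \<phi> (Inl 1))" for i :: nat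
  have modn: "i mod n < n" for i using n by simp
  have divm: "i < m * n \<Longrightarrow> i div n < m" for i by (simp add: less_mult_imp_div_less mult.commute)
  have inS: "Inr (j, p) \<in> S" if "j < m" "p < n" for j p using sub that unfolding n_def by auto
  have vS: "\<forall>i<m*n. v i \<in> S" using inS modn divm unfolding v_def by auto
  have bS: "Inl 1 \<in> S" using sub by auto
  show ?thesis unfolding n_def[symmetric]
  proof (rule os_groups[OF rep vS])
    show "\<forall>i<m*n. \<forall>j<i. g j = g i \<longrightarrow> inner_d d (w i) (\<phi> (v j)) = 0"
    proof (intro allI impI)
      fix i j assume ij: "i < m*n" "j < i" "g j = g i"
      then have jm: "j mod n < i mod n" unfolding g_def
        by (metis div_mult_mod_eq add_less_cancel_left)
      have jd: "j div n = i div n" using ij unfolding g_def by simp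
      have im: "i div n < m" "j div n < m" using divm ij by auto
      show "inner_d d (w i) (\<phi> (v j)) = 0"
      proof (cases "i mod n < n - 1")
        case True
        then have "w i = \<phi> (Inr (i div n, i mod n + 1))" unfolding w_def by simp
        moreover have "inner_d d (\<phi> (Inr (i div n, i mod n + 1))) (\<phi> (Inr (j div n, j mod n))) = 0"
          by (rule orep_zero[OF rep]) (use inS im True jm jd modn[of j] in auto)
        ultimately show ?thesis unfolding v_def by simp
      next
        case False
        then have "w i = \<phi> (Inl 1)" unfolding w_def by simp
        moreover have jl: "j mod n < n - 1" using jm modn[of i] by linarith
        moreover have "inner_d d (\<phi> (Inl 1)) (\<phi> (Inr (j div n, j mod n))) = 0"
          by (rule orep_zero[OF rep]) (use inS bS im jl n in auto)
        ultimately show ?thesis unfolding v_def by simp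
      qed
    qed
    show "\<forall>i<m*n. inner_d d (w i) (\<phi> (v i)) \<noteq> 0"
    proof (intro allI impI)
      fix i assume i: "i < m*n"
      have im: "i div n < m" using divm i by auto
      show "inner_d d (w i) (\<phi> (v i)) \<noteq> 0"
      proof (cases "i mod n < n - 1")
        case True
        then have "w i = \<phi> (Inr (i div n, i mod n + 1))" unfolding w_def by simp
        moreover have "inner_d d (\<phi> (Inr (i div n, i mod n + 1))) (\<phi> (Inr (i div n, i mod n))) \<noteq> 0"
          by (rule orep_nz[OF rep]) (use inS im True modn[of i] n in auto)
        ultimately show ?thesis unfolding v_def by simp
      next
        case False
        then have "w i = \<phi> (Inl 1)" unfolding w_def by simp
        moreover have il: "i mod n = n - 1" using False modn[of i] by linarith
        moreover have "inner_d d (\<phi> (Inl 1)) (\<phi> (Inr (i div n, i mod n))) \<noteq> 0"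
          by (rule orep_nz[OF rep]) (use inS bS im il n in auto)
        ultimately show ?thesis unfolding v_def by simp
      qed
    qed
    show "\<forall>i<m*n. \<forall>j<m*n. g i \<noteq> g j \<longrightarrow> v i \<noteq> v j \<and> \<not> badj t m (v i) (v j)"
      unfolding v_def g_def by auto
  qed
qed

lemma lb_t3:
  assumes t: "t = 3" and m: "m \<ge> 1" and rep: "orep S (\<lambda>u v. \<not> badj t m u v) d \<phi>"
    and sub: "{Inl 0, Inl 1, Inr (0,0)} \<subseteq> S"
  shows "3 \<le> d"
proof -
  define v :: "nat \<Rightarrow> bv" where "v i = (if i = 0 then Inl 0 else if i = (1::nat) then Inl 1 else Inr (0::nat,0::nat))" for i
  have vS: "\<forall>i<3. v i \<in> S" using sub unfolding all_less_3 v_def by auto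
  show ?thesis
  proof (rule os_groups[OF rep vS, where g = "\<lambda>_. 0" and w = "\<lambda>i. \<phi> (v i)"])
    show "\<forall>i<3. \<forall>j<i. (0::nat) = 0 \<longrightarrow> inner_d d (\<phi> (v i)) (\<phi> (v j)) = 0"
      unfolding all_less_3 all_less_1 all_less_2 v_def using sub t m
      by (auto intro!: orep_zero[OF rep])
    show "\<forall>i<3. inner_d d (\<phi> (v i)) (\<phi> (v i)) \<noteq> 0" using vS orep_self[OF rep] by auto
  qed simp
qed

lemma lb_t4:
  assumes t: "t = 4" and m: "m \<ge> 2" and rep: "orep S (\<lambda>u v. \<not> badj t m u v) d \<phi>"
    and sub: "bV t m \<subseteq> S"
  shows "4 \<le> d"
proof -
  define v :: "nat \<Rightarrow> bv" where "v i = (if i = 0 then Inl 1 else if i = (1::nat) then Inr (0::nat,0::nat) else if i = 2 then Inr (1,0) else Inl 0)" for i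
  define w :: "nat \<Rightarrow> bv" where "w i = (if i = 0 then Inl 1 else if i = (1::nat) then Inr (1::nat,1::nat) else if i = 2 then Inr (0,1) else Inl 0)" for i
  have inS: "Inl 0 \<in> S" "Inl 1 \<in> S" "Inr (0,0) \<in> S" "Inr (1,0) \<in> S" "Inr (0,1) \<in> S" "Inr (1,1) \<in> S"
    using sub t m by auto
  have vS: "\<forall>i<4. v i \<in> S" using inS unfolding all_less_4 v_def by auto
  show ?thesis
  proof (rule os_groups[OF rep vS, where g = "\<lambda>_. 0" and w = "\<lambda>i. \<phi> (w i)"])
    show "\<forall>i<4. \<forall>j<i. (0::nat) = 0 \<longrightarrow> inner_d d (\<phi> (w i)) (\<phi> (v j)) = 0"
      unfolding all_less_4 all_less_3 all_less_1 all_less_2 v_def w_def using inS t m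
      by (auto intro!: orep_zero[OF rep])
    have "inner_d d (\<phi> (Inr (1,1))) (\<phi> (Inr (0,0))) \<noteq> 0"
      by (rule orep_nz[OF rep]) (use inS t m in auto)
    moreover have "inner_d d (\<phi> (Inr (0,1))) (\<phi> (Inr (1,0))) \<noteq> 0"
      by (rule orep_nz[OF rep]) (use inS t m in auto)
    ultimately show "\<forall>i<4. inner_d d (\<phi> (w i)) (\<phi> (v i)) \<noteq> 0"
      unfolding all_less_4 v_def w_def using inS
      by (auto intro!: orep_self[OF rep])
  qed simp
qed

lemma lb_compl_spider:
  assumes t: "t \<ge> 4" and m: "m \<ge> 2" and rep: "orep S (\<lambda>u v. \<not> badj t m u v) d \<phi>"
    and sub: "bV t m - {Inl 0} \<subseteq> S"
  shows "3 \<le> d"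
proof -
  define L where "L = t - 3"
  have L: "L \<ge> 1" "t - 3 = L" "t - 2 = L + 1" using t unfolding L_def by auto
  define v :: "nat \<Rightarrow> bv" where "v i = (if i = 0 then Inr (0,L) else if i = (1::nat) then Inr (1::nat,L) else Inr (0, 0))" for i
  define w :: "nat \<Rightarrow> bv" where "w i = (if i = 0 then Inr (0,L) else if i = (1::nat) then Inr (0::nat,L-1) else Inl 1)" for i
  have inS: "Inl 1 \<in> S" "Inr (0,0) \<in> S" "Inr (0,L) \<in> S" "Inr (1,L) \<in> S" "Inr (0,L-1) \<in> S"
    using sub L m by auto
  have vS: "\<forall>i<3. v i \<in> S" using inS unfolding all_less_3 v_def by auto
  show ?thesis
  proof (rule os_groups[OF rep vS, where g = "\<lambda>_. 0" and w = "\<lambda>i. \<phi> (w i)"])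
    show "\<forall>i<3. \<forall>j<i. (0::nat) = 0 \<longrightarrow> inner_d d (\<phi> (w i)) (\<phi> (v j)) = 0"
      unfolding all_less_3 all_less_1 all_less_2 v_def w_def using inS L m
      by (auto intro!: orep_zero[OF rep])
    have "inner_d d (\<phi> (Inr (0,L-1))) (\<phi> (Inr (1,L))) \<noteq> 0"
      by (rule orep_nz[OF rep]) (use inS L m in auto)
    moreover have "inner_d d (\<phi> (Inl 1)) (\<phi> (Inr (0,0))) \<noteq> 0"
      by (rule orep_nz[OF rep]) (use inS L m in auto)
    ultimately show "\<forall>i<3. inner_d d (\<phi> (w i)) (\<phi> (v i)) \<noteq> 0"
      unfolding all_less_3 v_def w_def using inS
      by (auto intro!: orep_self[OF rep])
  qed simp
qed


lemma edge_rep: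
  fixes h :: "'a \<Rightarrow> 'e \<Rightarrow> real"
  assumes "finite Ed"
  shows "\<exists>\<phi>. (\<forall>u v. inner_d (card Ed) (\<phi> u) (\<phi> v) = (\<Sum>e\<in>Ed. h u e * h v e)) \<and>
              (\<forall>u. (\<exists>i<card Ed. \<phi> u i \<noteq> 0) \<longleftrightarrow> (\<exists>e\<in>Ed. h u e \<noteq> 0))"
proof -
  obtain f where f: "bij_betw f {0..<card Ed} Ed" using ex_bij_betw_nat_finite[OF assms] by blast
  define \<phi> where "\<phi> u = (\<lambda>k. h u (f k))" for u
  have "inner_d (card Ed) (\<phi> u) (\<phi> v) = (\<Sum>e\<in>Ed. h u e * h v e)" for u v
    unfolding inner_d_def \<phi>_def lessThan_atLeast0
    using sum.reindex_bij_betw[OF f, of "\<lambda>e. h u e * h v e"] by simp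
  moreover have "(\<exists>i<card Ed. \<phi> u i \<noteq> 0) \<longleftrightarrow> (\<exists>e\<in>Ed. h u e \<noteq> 0)" for u
  proof
    assume "\<exists>i<card Ed. \<phi> u i \<noteq> 0"
    then obtain i where "i < card Ed" "h u (f i) \<noteq> 0" unfolding \<phi>_def by auto
    then show "\<exists>e\<in>Ed. h u e \<noteq> 0" using f unfolding bij_betw_def by auto
  next
    assume "\<exists>e\<in>Ed. h u e \<noteq> 0"
    then obtain e where "e \<in> Ed" "h u e \<noteq> 0" by auto
    then obtain i where "i < card Ed" "f i = e" using f unfolding bij_betw_def by force
    then show "\<exists>i<card Ed. \<phi> u i \<noteq> 0" unfolding \<phi>_def using \<open>h u e \<noteq> 0\<close> by auto
  qed
  ultimately show ?thesis by blast
qed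

lemma sum01:
  assumes "finite Ed"
  shows "(\<Sum>e\<in>Ed. (if P e then 1 else 0) * (if Q e then 1 else 0) :: real) = 0 \<longleftrightarrow> \<not>(\<exists>e\<in>Ed. P e \<and> Q e)"
  using assms by (subst sum_nonneg_eq_0_iff) auto

lemma sum_two:
  assumes "finite Ed"
  shows "(\<Sum>e\<in>Ed. (if e = p \<or> (c \<and> e = q) then 1 else 0) * f e :: real) =
     (if p \<in> Ed then f p else 0) + (if c \<and> q \<in> Ed \<and> q \<noteq> p then f q else 0)"
proof -
  have "(\<Sum>e\<in>Ed. (if e = p \<or> (c \<and> e = q) then 1 else 0) * f e) =
        (\<Sum>e\<in>Ed. (if e = p then f e else 0) + (if c \<and> q \<noteq> p \<and> e = q then f e else 0))"
    by (rule sum.cong) auto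
  also have "\<dots> = (\<Sum>e\<in>Ed. (if e = p then f e else 0)) + (\<Sum>e\<in>Ed. (if c \<and> q \<noteq> p \<and> e = q then f e else 0))"
    by (rule sum.distrib)
  also have "(\<Sum>e\<in>Ed. (if e = p then f e else 0)) = (if p \<in> Ed then f p else 0)"
    using assms by (simp add: sum.delta')
  also have "(\<Sum>e\<in>Ed. (if c \<and> q \<noteq> p \<and> e = q then f e else 0)) = (if c \<and> q \<in> Ed \<and> q \<noteq> p then f q else 0)"
  proof (cases "c \<and> q \<noteq> p")
    case True then show ?thesis using assms by (simp add: sum.delta')
  next
    case False then show ?thesis by (auto intro!: sum.neutral)
  qed
  finally show ?thesis .
qed

definition hx :: "nat \<Rightarrow> nat \<Rightarrow> nat \<times> nat \<Rightarrow> real" where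
  "hx j i e = (if e = (j,i) \<or> (0 < i \<and> e = (j,i-1)) then 1 else 0)"

definition hw :: "nat \<Rightarrow> nat set \<Rightarrow> bv \<Rightarrow> nat \<times> nat \<Rightarrow> real" where
  "hw t J u e = (case u of Inl p \<Rightarrow> (if p = 0 then (if fst e \<in> J then (-1)^(snd e) else 0)
                                    else (if snd e = t - 3 then 1 else 0))
                | Inr (j,i) \<Rightarrow> hx j i e)"

lemma book_rep_tree:
  fixes t m :: nat and Z :: "(nat \<times> nat) set" and J :: "nat set" and S :: "bv set"
  assumes t: "t \<ge> 3"
    and SV: "S \<subseteq> bV t m"
    and Z: "\<forall>p\<in>Z. Inr p \<notin> S"
    and J: "J \<subseteq> {..<m}" "J \<noteq> {}"
    and JZ: "\<forall>j\<in>J. \<forall>i. (j,i) \<notin> Z"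
    and nJ: "\<forall>j<m. j \<notin> J \<longrightarrow> Inr (j,0) \<notin> S"
  shows "\<exists>\<phi>. orep S (badj t m) (card (({..<m} \<times> {..<t-2}) - Z)) \<phi>"
proof -
  define Ed where "Ed = ({..<m} \<times> {..<t-2}) - Z"
  have fin: "finite Ed" unfolding Ed_def by auto
  obtain \<phi> where ip: "\<And>u v. inner_d (card Ed) (\<phi> u) (\<phi> v) = (\<Sum>e\<in>Ed. hw t J u e * hw t J v e)"
    and nz: "\<And>u. (\<exists>i<card Ed. \<phi> u i \<noteq> 0) \<longleftrightarrow> (\<exists>e\<in>Ed. hw t J u e \<noteq> 0)"
    using edge_rep[OF fin, of "hw t J"] by blast
  have inEd: "(j,i) \<in> Ed" if "Inr (j,i) \<in> S" for j i using that SV Z unfolding Ed_def by auto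
  have inEdJ: "(j,i) \<in> Ed" if "j \<in> J" "i < t - 2" for j i using that J JZ unfolding Ed_def by auto
  obtain j1 where j1: "j1 \<in> J" using J by auto
  have t2: "0 < t - 2" "t - 3 < t - 2" using t by auto
  have N: "\<exists>e\<in>Ed. hw t J v e \<noteq> 0" if "v \<in> S" for v
  proof (cases v)
    case (Inl p)
    then have "p = 0 \<or> p = 1" using that SV by auto
    then show ?thesis
    proof
      assume "p = 0" then show ?thesis using Inl inEdJ[OF j1 t2(1)] j1 by (intro bexI[of _ "(j1,0)"]) (auto simp: hw_def)
    next
      assume "p = 1" then show ?thesis using Inl inEdJ[OF j1 t2(2)] j1 by (intro bexI[of _ "(j1,t-3)"]) (auto simp: hw_def)
    qed
  next
    case (Inr q)
    then obtain j i where q: "v = Inr (j,i)" by (cases q) auto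
    then show ?thesis using inEd[of j i] that by (intro bexI[of _ "(j,i)"]) (auto simp: hw_def hx_def)
  qed
  have XX: "(\<Sum>e\<in>Ed. hw t J (Inr (j,i)) e * hw t J (Inr (j',i')) e) = 0 \<longleftrightarrow> \<not> badj t m (Inr (j,i)) (Inr (j',i'))"
    if "Inr (j,i) \<in> S" "Inr (j',i') \<in> S" "(j,i) \<noteq> (j',i')" for j i j' i'
  proof -
    have "(\<Sum>e\<in>Ed. hw t J (Inr (j,i)) e * hw t J (Inr (j',i')) e) = 0 \<longleftrightarrow>
        (\<Sum>e\<in>Ed. (if (e = (j,i) \<or> (0 < i \<and> e = (j,i-1))) then 1 else 0) * (if (e = (j',i') \<or> (0 < i' \<and> e = (j',i'-1))) then 1 else (0::real))) = 0"
      unfolding hw_def hx_def by simp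
    also have "\<dots> \<longleftrightarrow> \<not>(\<exists>e\<in>Ed. (e = (j,i) \<or> (0 < i \<and> e = (j,i-1))) \<and> (e = (j',i') \<or> (0 < i' \<and> e = (j',i'-1))))"
      by (rule sum01[OF fin])
    also have "\<dots> \<longleftrightarrow> \<not> badj t m (Inr (j,i)) (Inr (j',i'))"
      using that inEd[of j i] inEd[of j' i'] SV by auto
    finally show ?thesis .
  qed
  have XB: "(\<Sum>e\<in>Ed. hw t J (Inr (j,i)) e * hw t J (Inl 1) e) = 0 \<longleftrightarrow> \<not> badj t m (Inr (j,i)) (Inl 1)"
    if "Inr (j,i) \<in> S" for j i
  proof -
    have "i < t - 2" "j < m" using that SV by auto
    have "(\<Sum>e\<in>Ed. hw t J (Inr (j,i)) e * hw t J (Inl 1) e) = 0 \<longleftrightarrow>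
        (\<Sum>e\<in>Ed. (if (e = (j,i) \<or> (0 < i \<and> e = (j,i-1))) then 1 else 0) * (if snd e = t - 3 then 1 else (0::real))) = 0"
      unfolding hw_def hx_def by simp
    also have "\<dots> \<longleftrightarrow> \<not>(\<exists>e\<in>Ed. (e = (j,i) \<or> (0 < i \<and> e = (j,i-1))) \<and> snd e = t - 3)"
      by (rule sum01[OF fin])
    also have "\<dots> \<longleftrightarrow> \<not> badj t m (Inr (j,i)) (Inl 1)"
      using that inEd[of j i] \<open>i < t - 2\<close> \<open>j < m\<close> by auto
    finally show ?thesis .
  qed
  have XA: "(\<Sum>e\<in>Ed. hw t J (Inr (j,i)) e * hw t J (Inl 0) e) = 0 \<longleftrightarrow> \<not> badj t m (Inr (j,i)) (Inl 0)"
    if "Inr (j,i) \<in> S" for j i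
  proof -
    have s: "(\<Sum>e\<in>Ed. hw t J (Inr (j,i)) e * hw t J (Inl 0) e) =
      (if (j,i) \<in> Ed then (if j \<in> J then (-1)^i else 0) else 0) +
      (if 0 < i \<and> (j,i-1) \<in> Ed \<and> (j,i-1) \<noteq> (j,i) then (if j \<in> J then (-1)^(i-1) else 0) else 0)"
      unfolding hw_def hx_def using sum_two[OF fin] by simp
    have jm: "j < m" "i < t - 2" using that SV by auto
    show ?thesis
    proof (cases "j \<in> J")
      case True
      then have e1: "(j,i) \<in> Ed" "0 < i \<Longrightarrow> (j,i-1) \<in> Ed" using inEdJ jm by auto
      show ?thesis
      proof (cases "i = 0")
        case True then show ?thesis using s e1 \<open>j \<in> J\<close> jm by simp
      next
        case False
        then have "(-1::real)^i + (-1)^(i-1) = 0"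
          by (cases i) auto
        then show ?thesis using s e1 \<open>j \<in> J\<close> jm False by simp
      qed
    next
      case False
      then have "i \<noteq> 0" using nJ jm that by (metis gr_zeroI)
      then show ?thesis using s False by simp
    qed
  qed
  have AB: "(\<Sum>e\<in>Ed. hw t J (Inl 0) e * hw t J (Inl 1) e) \<noteq> 0"
  proof -
    have "(\<Sum>e\<in>Ed. hw t J (Inl 0) e * hw t J (Inl 1) e) = (-1)^(t-3) * (\<Sum>e\<in>Ed. (if fst e \<in> J then 1 else 0) * (if snd e = t - 3 then 1 else 0))"
      unfolding hw_def sum_distrib_left by (rule sum.cong) auto
    moreover have "(\<Sum>e\<in>Ed. (if fst e \<in> J then 1 else 0) * (if snd e = t - 3 then 1 else (0::real))) \<noteq> 0"
      unfolding sum01[OF fin] using inEdJ[OF j1 t2(2)] j1 by (intro notI bexI[of _ "(j1, t-3)"]) auto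
    ultimately show ?thesis by simp
  qed
  have O: "(\<Sum>e\<in>Ed. hw t J u e * hw t J v e) = 0 \<longleftrightarrow> \<not> badj t m u v" if "u \<in> S" "v \<in> S" "u \<noteq> v" for u v
  proof -
    have sym: "(\<Sum>e\<in>Ed. hw t J u e * hw t J v e) = (\<Sum>e\<in>Ed. hw t J v e * hw t J u e)"
      by (simp add: mult.commute)
    show ?thesis
    proof (cases u)
      case (Inl p)
      then have p: "p = 0 \<or> p = 1" using that SV by auto
      show ?thesis
      proof (cases v)
        case (Inl q)
        then have "q = 0 \<or> q = 1" using that SV by auto
        then show ?thesis using p Inl \<open>u = Inl p\<close> that AB sym by auto
      next
        case (Inr q)
        then obtain j i where q: "v = Inr (j,i)" by (cases q) auto
        then show ?thesis using p \<open>u = Inl p\<close> XA[of j i] XB[of j i] that sym badj_sym by metis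
      qed
    next
      case (Inr q)
      then obtain j i where q: "u = Inr (j,i)" by (cases q) auto
      show ?thesis
      proof (cases v)
        case (Inl p)
        then have "p = 0 \<or> p = 1" using that SV by auto
        then show ?thesis using q Inl XA[of j i] XB[of j i] that by auto
      next
        case (Inr q')
        then obtain j' i' where q': "v = Inr (j',i')" by (cases q') auto
        then show ?thesis using q XX[of j i j' i'] that by auto
      qed
    qed
  qed
  have "orep S (badj t m) (card Ed) \<phi>"
    unfolding orep_def using N nz O ip by auto
  then show ?thesis unfolding Ed_def by blast
qed


lemma inner_d_2: "inner_d 2 x y = x 0 * y 0 + x 1 * y 1"
  by (simp add: inner_d_def eval_nat_numeral lessThan_Suc)
lemma inner_d_3: "inner_d 3 x y = x 0 * y 0 + x 1 * y 1 + x 2 * y 2"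
  by (simp add: inner_d_def eval_nat_numeral lessThan_Suc)
lemma inner_d_4: "inner_d 4 x y = x 0 * y 0 + x 1 * y 1 + x 2 * y 2 + x 3 * y 3"
  by (simp add: inner_d_def eval_nat_numeral lessThan_Suc)

definition v4 :: "real \<Rightarrow> real \<Rightarrow> real \<Rightarrow> real \<Rightarrow> nat \<Rightarrow> real" where
  "v4 a b c d = (\<lambda>i. if i = 0 then a else if i = 1 then b else if i = 2 then c else if i = 3 then d else 0)"

lemma v4_simps[simp]: "v4 a b c d 0 = a" "v4 a b c d 1 = b" "v4 a b c d 2 = c" "v4 a b c d 3 = d" "v4 a b c d (Suc 0) = b"
  by (simp_all add: v4_def)

lemma v4_ex: "(a \<noteq> 0 \<and> 0 < n) \<or> (b \<noteq> 0 \<and> 1 < n) \<or> (c \<noteq> 0 \<and> 2 < n) \<or> (d \<noteq> 0 \<and> 3 < n) \<Longrightarrow> \<exists>i<n. v4 a b c d i \<noteq> 0"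
  by (elim disjE) (metis v4_simps)+

lemma neg_prod_ne2[simp]: "- (real a * real b) \<noteq> 2" "- (real a * real b) \<noteq> 1"
proof -
  have "0 \<le> real a * real b" by simp
  then show "- (real a * real b) \<noteq> 2" "- (real a * real b) \<noteq> 1" by linarith+
qed

lemma orepI:
  assumes "\<And>v. v \<in> S \<Longrightarrow> \<exists>i<d. \<phi> v i \<noteq> 0"
    and "\<And>u v. u \<in> S \<Longrightarrow> v \<in> S \<Longrightarrow> u \<noteq> v \<Longrightarrow> inner_d d (\<phi> u) (\<phi> v) = 0 \<longleftrightarrow> \<not> A u v"
  shows "orep S A d \<phi>"
  using assms unfolding orep_def by blast

lemma bV_cases:
  assumes "u \<in> bV t m"
  obtains "u = Inl 0" | "u = Inl 1" | j i where "u = Inr (j,i)" "j < m" "i < t - 2"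
  using assms unfolding bV_def by auto

lemma rep_c3:
  assumes "t = 3"
  shows "orep (bV t m) (\<lambda>u v. \<not> badj t m u v) 3
     (\<lambda>u. case u of Inl p \<Rightarrow> (if p = 0 then v4 1 0 0 0 else v4 0 1 0 0) | Inr _ \<Rightarrow> v4 0 0 1 0)"
proof (rule orepI)
  fix v assume "v \<in> bV t m"
  then show "\<exists>i<3. (case v of Inl p \<Rightarrow> (if p = 0 then v4 1 0 0 0 else v4 0 1 0 0) | Inr _ \<Rightarrow> v4 0 0 1 0) i \<noteq> 0"
    by (cases rule: bV_cases) (auto intro!: v4_ex)
next
  fix u v assume uv: "u \<in> bV t m" "v \<in> bV t m" "u \<noteq> v"
  then show "inner_d 3 ((\<lambda>u. case u of Inl p \<Rightarrow> (if p = 0 then v4 1 0 0 0 else v4 0 1 0 0) | Inr _ \<Rightarrow> v4 0 0 1 0) u)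
      ((\<lambda>u. case u of Inl p \<Rightarrow> (if p = 0 then v4 1 0 0 0 else v4 0 1 0 0) | Inr _ \<Rightarrow> v4 0 0 1 0) v) = 0 \<longleftrightarrow>
      \<not> \<not> badj t m u v"
    using assms uv by (cases rule: bV_cases[OF uv(1)]; cases rule: bV_cases[OF uv(2)]) (auto simp: inner_d_3 v4_def)
qed

lemma rep_c3_del:
  assumes "t = 3" "p = 0 \<or> p = 1"
  shows "orep (bV t m - {Inl p}) (\<lambda>u v. \<not> badj t m u v) 2
     (\<lambda>u. case u of Inl _ \<Rightarrow> v4 1 0 0 0 | Inr _ \<Rightarrow> v4 0 1 0 0)"
proof (rule orepI)
  fix v assume "v \<in> bV t m - {Inl p}"
  then show "\<exists>i<2. (case v of Inl _ \<Rightarrow> v4 1 0 0 0 | Inr _ \<Rightarrow> v4 0 1 0 0) i \<noteq> 0"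
    by (cases v) (auto intro!: v4_ex)
next
  fix u v assume uv: "u \<in> bV t m - {Inl p}" "v \<in> bV t m - {Inl p}" "u \<noteq> v"
  then have uv': "u \<in> bV t m" "v \<in> bV t m" by auto
  then show "inner_d 2 ((\<lambda>u. case u of Inl _ \<Rightarrow> v4 1 0 0 0 | Inr _ \<Rightarrow> v4 0 1 0 0) u)
      ((\<lambda>u. case u of Inl _ \<Rightarrow> v4 1 0 0 0 | Inr _ \<Rightarrow> v4 0 1 0 0) v) = 0 \<longleftrightarrow> \<not> \<not> badj t m u v"
    using assms uv by (cases rule: bV_cases[OF uv'(1)]; cases rule: bV_cases[OF uv'(2)]) (auto simp: inner_d_2 v4_def)
qed

lemma inner_v4_4: "inner_d 4 (v4 a b c d) (v4 a' b' c' d') = a*a' + b*b' + c*c' + d*d'"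
  unfolding inner_d_4 by simp
lemma inner_v4_3: "inner_d 3 (v4 a b c d) (v4 a' b' c' d') = a*a' + b*b' + c*c'"
  unfolding inner_d_3 by simp

lemma bV_cases4:
  assumes "u \<in> bV 4 m"
  obtains "u = Inl 0" | "u = Inl 1" | j where "u = Inr (j,0)" "j < m" | j where "u = Inr (j,1)" "j < m"
proof -
  have "u = Inl 0 \<or> u = Inl 1 \<or> (\<exists>j<m. u = Inr (j,0)) \<or> (\<exists>j<m. u = Inr (j,1))"
    using assms unfolding bV_def by (auto simp: less_2_cases_iff)
  then show ?thesis using that by blast
qed

definition c4 :: "bv \<Rightarrow> nat \<Rightarrow> real" where
  "c4 u = (case u of Inl p \<Rightarrow> (if p = 0 then v4 1 0 0 0 else v4 0 1 0 0)
      | Inr (j,i) \<Rightarrow> (if i = 0 then v4 0 1 1 (real j + 1) else v4 1 0 (real j + 1) (-1)))"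

lemma c4_simps: "c4 (Inl 0) = v4 1 0 0 0" "c4 (Inl 1) = v4 0 1 0 0" "c4 (Inl (Suc 0)) = v4 0 1 0 0" "c4 (Inr (j,0)) = v4 0 1 1 (real j + 1)"
  "c4 (Inr (j,1)) = v4 1 0 (real j + 1) (-1)" "c4 (Inr (j,Suc 0)) = v4 1 0 (real j + 1) (-1)"
  unfolding c4_def by simp_all

lemma rep_c4:
  assumes "t = 4"
  shows "orep (bV t m) (\<lambda>u v. \<not> badj t m u v) 4 c4"
proof (rule orepI)
  fix v assume "v \<in> bV t m"
  then show "\<exists>i<4. c4 v i \<noteq> 0" unfolding assms
    by (cases rule: bV_cases4) (auto simp: c4_simps intro!: v4_ex)
next
  fix u v assume uv: "u \<in> bV t m" "v \<in> bV t m" "u \<noteq> v"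
  have p: "(real j + 1) * (real k + 1) + 2 \<noteq> 0" "1 + (real j + 1) * (real k + 1) + 1 \<noteq> 0" for j k :: nat
  proof -
    have "0 \<le> (real j + 1) * (real k + 1)" by simp
    then show "(real j + 1) * (real k + 1) + 2 \<noteq> 0" "1 + (real j + 1) * (real k + 1) + 1 \<noteq> 0" by linarith+
  qed
  have p2: "real j + (real k + (3 + real j * real k)) \<noteq> 0" for j k :: nat
  proof -
    have "0 \<le> real j * real k" by simp
    then show ?thesis by linarith
  qed
  have q: "real j + 1 - (real k + 1) = 0 \<longleftrightarrow> j = k" "- (real j + 1) + (real k + 1) = 0 \<longleftrightarrow> j = k" for j k :: nat
    by auto
  from uv show "inner_d 4 (c4 u) (c4 v) = 0 \<longleftrightarrow> \<not> \<not> badj t m u v" unfolding assms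
    by (cases rule: bV_cases4[OF uv(1)[unfolded assms]]; cases rule: bV_cases4[OF uv(2)[unfolded assms]])
       (auto simp: c4_simps inner_v4_4 algebra_simps p q p2)
qed

definition c4d :: "nat \<Rightarrow> bv \<Rightarrow> nat \<Rightarrow> real" where
  "c4d p u = (case u of Inl _ \<Rightarrow> v4 1 0 0 0
      | Inr (j,i) \<Rightarrow> (if i = 1 - p then v4 0 1 (real j) 0 else v4 1 (- real j) 1 0))"

lemma rep_c4_del:
  assumes "t = 4" "p = 0 \<or> p = 1"
  shows "orep (bV t m - {Inl p}) (\<lambda>u v. \<not> badj t m u v) 3 (c4d p)"
proof (rule orepI)
  fix v assume "v \<in> bV t m - {Inl p}"
  then show "\<exists>i<3. c4d p v i \<noteq> 0"
    by (cases v) (auto simp: c4d_def intro!: v4_ex)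
next
  fix u v assume uv: "u \<in> bV t m - {Inl p}" "v \<in> bV t m - {Inl p}" "u \<noteq> v"
  then have uv': "u \<in> bV 4 m" "v \<in> bV 4 m" using assms by auto
  have p: "1 + real j * real k + 1 \<noteq> 0" "1 + 0 * 0 + real j * real k \<noteq> 0"
      "2 + real j * real k \<noteq> 0" "1 + real j * real k \<noteq> 0" for j k :: nat
  proof -
    have "0 \<le> real j * real k" by simp
    then show "1 + real j * real k + 1 \<noteq> 0" "1 + 0 * 0 + real j * real k \<noteq> 0"
      "2 + real j * real k \<noteq> 0" "1 + real j * real k \<noteq> 0" by linarith+
  qed
  show "inner_d 3 (c4d p u) (c4d p v) = 0 \<longleftrightarrow> \<not> \<not> badj t m u v"
    using assms(2)
  proof
    assume p0: "p = 0"
    have cs: "c4d 0 (Inl q) = v4 1 0 0 0" "c4d 0 (Inr (j,1)) = v4 0 1 (real j) 0" "c4d 0 (Inr (j,Suc 0)) = v4 0 1 (real j) 0" "c4d 0 (Inr (j,0)) = v4 1 (- real j) 1 0" for q j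
      unfolding c4d_def by simp_all
    from uv show ?thesis unfolding assms(1) p0
      by (cases rule: bV_cases4[OF uv'(1)]; cases rule: bV_cases4[OF uv'(2)])
       (auto simp: cs inner_v4_3 algebra_simps p p0)
  next
    assume p1: "p = 1"
    have cs: "c4d (Suc 0) (Inl q) = v4 1 0 0 0" "c4d (Suc 0) (Inr (j,0)) = v4 0 1 (real j) 0" "c4d (Suc 0) (Inr (j,1)) = v4 1 (- real j) 1 0" "c4d (Suc 0) (Inr (j,Suc 0)) = v4 1 (- real j) 1 0" for q j
      unfolding c4d_def by simp_all
    from uv show ?thesis unfolding assms(1) p1
      by (cases rule: bV_cases4[OF uv'(1)]; cases rule: bV_cases4[OF uv'(2)])
       (auto simp: cs inner_v4_3 algebra_simps p p1)
  qed
qed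


definition th :: "nat \<Rightarrow> real" where "th L = pi / (2 * real L)"
definition KK :: "nat \<Rightarrow> real" where "KK L = 1 / (sin (th L) * cos (th L))"
definition cc :: "nat \<Rightarrow> real" where "cc L = sqrt (1 / cos (th L))"
definition RR :: "nat \<Rightarrow> nat \<Rightarrow> nat \<Rightarrow> real" where
  "RR L j i = cc L * (if even i then KK L ^ j else 1 / KK L ^ j)"
definition XX :: "nat \<Rightarrow> nat \<Rightarrow> nat \<Rightarrow> nat \<Rightarrow> real" where
  "XX L j i = v4 (- ((-1)^i * RR L j i * sin (real i * th L))) ((-1)^i * RR L j i * cos (real i * th L)) 1 0"

context
  fixes L :: nat assumes L2: "L \<ge> 2"
begin

lemma th_pos: "0 < th L" unfolding th_def using L2 by simp
lemma th_le: "th L \<le> pi / 4"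
proof -
  have "pi / (2 * real L) \<le> pi / (2 * 2)" using L2 by (intro divide_left_mono) auto
  then show ?thesis unfolding th_def by simp
qed
lemma th_lt: "th L < pi / 2" using th_le pi_gt_zero by linarith
lemma sin_th: "0 < sin (th L)" using th_pos th_lt by (intro sin_gt_zero) auto
lemma cos_th: "0 < cos (th L)" using th_pos th_lt by (intro cos_gt_zero) auto
lemma Lth: "real L * th L = pi / 2" unfolding th_def using L2 by simp
lemma nth_range: "n \<le> L \<Longrightarrow> 0 \<le> real n * th L \<and> real n * th L \<le> pi / 2"
proof -
  assume "n \<le> L"
  then have "real n * th L \<le> real L * th L" using th_pos by (intro mult_right_mono) auto
  then show ?thesis using Lth th_pos by simp
qed
lemma cosn_nonneg: "n \<le> L \<Longrightarrow> 0 \<le> cos (real n * th L)"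
proof -
  assume "n \<le> L"
  then have h: "0 \<le> real n * th L" "real n * th L \<le> pi / 2" using nth_range by auto
  have h2: "-(pi/2) \<le> real n * th L" using h(1) pi_gt_zero by linarith
  show ?thesis by (rule cos_ge_zero[OF h2 h(2)])
qed
lemma cosn_eq: assumes "n \<le> L" shows "cos (real n * th L) = cos (th L) \<longleftrightarrow> n = 1"
proof
  assume "cos (real n * th L) = cos (th L)"
  moreover have h: "0 \<le> real n * th L" "real n * th L \<le> pi / 2" using nth_range[OF assms] by auto
  moreover have "real n * th L \<le> pi" "th L \<le> pi" "0 \<le> th L" using h th_pos th_lt pi_gt_zero by linarith+
  ultimately have "real n * th L = th L" using cos_inj_pi by blast
  then show "n = 1" using th_pos by simp
qed simp
lemma cosL: "cos (real L * th L) = 0" by (subst Lth) simp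
lemma cosn_ge: assumes "n + 1 \<le> L" shows "sin (th L) \<le> cos (real n * th L)"
proof -
  have "real n * th L \<le> real (L - 1) * th L" using assms th_pos by (intro mult_right_mono) auto
  also have "\<dots> = pi/2 - th L" using Lth L2 by (simp add: of_nat_diff algebra_simps)
  finally have le: "real n * th L \<le> pi / 2 - th L" .
  have "cos (pi/2 - th L) \<le> cos (real n * th L)"
    using le nth_range[of n] assms th_pos th_lt by (subst cos_mono_le_eq) auto
  then show ?thesis by (simp add: cos_sin_eq[symmetric] sin_cos_eq)
qed
lemma sinn_zero: assumes "n \<le> L" shows "sin (real n * th L) = 0 \<longleftrightarrow> n = 0"
proof
  assume s: "sin (real n * th L) = 0"
  show "n = 0"
  proof (rule ccontr)
    assume "n \<noteq> 0"
    then have "0 < real n * th L" using th_pos by simp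
    moreover have "real n * th L < pi" using nth_range[OF assms] pi_gt_zero by linarith
    ultimately show False using sin_gt_zero s by fastforce
  qed
qed simp
lemma cosn_zero: assumes "n \<le> L" shows "cos (real n * th L) = 0 \<longleftrightarrow> n = L"
proof
  assume s: "cos (real n * th L) = 0"
  show "n = L"
  proof (rule ccontr)
    assume "n \<noteq> L"
    then have "n + 1 \<le> L" using assms by simp
    then show False using cosn_ge[of n] sin_th s by simp
  qed
qed (use cosL in simp)

lemma sc_lt1: "sin (th L) < 1" "cos (th L) < 1"
proof -
  have e: "sin (th L)^2 + cos (th L)^2 = 1" by simp
  have "cos (th L)^2 > 0" "sin (th L)^2 > 0" using cos_th sin_th by auto
  then have "sin (th L)^2 < 1" "cos (th L)^2 < 1" using e by linarith+
  then show "sin (th L) < 1" "cos (th L) < 1" using sin_th cos_th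
    by (metis abs_of_pos abs_square_less_1)+
qed

lemma KK_pos: "0 < KK L" unfolding KK_def using sin_th cos_th by simp

lemma KK_gt1: "1 < KK L"
proof -
  have "sin (th L) * cos (th L) < 1 * 1" using sin_th cos_th sc_lt1 by (intro mult_strict_mono) auto
  then show ?thesis unfolding KK_def using sin_th cos_th by simp
qed

lemma KK_big: "cos (th L) < KK L * sin (th L)"
proof -
  have "KK L * sin (th L) = 1 / cos (th L)" unfolding KK_def using sin_th by (simp add: field_simps)
  moreover have "cos (th L) * cos (th L) < 1 * 1" using cos_th sc_lt1 by (intro mult_strict_mono) auto
  then have "cos (th L) < 1 / cos (th L)" using cos_th by (simp add: less_divide_eq)
  ultimately show ?thesis by simp
qed

lemma KK_small: "1 / KK L < cos (th L)"
proof -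
  have "1 / KK L = sin (th L) * cos (th L)" unfolding KK_def by simp
  also have "\<dots> < 1 * cos (th L)" using sc_lt1 cos_th by (intro mult_strict_right_mono) auto
  finally show ?thesis by simp
qed

lemma cc_sq: "cc L * cc L = 1 / cos (th L)"
  unfolding cc_def using cos_th by simp
lemma cc_pos: "0 < cc L" unfolding cc_def using cos_th by simp

lemma RR_pos: "0 < RR L j i" unfolding RR_def using cc_pos KK_pos by simp

lemma inner_XX: "inner_d 3 (XX L j i) (XX L j' k) =
   (-1)^i * (-1)^k * (RR L j i * RR L j' k) * cos (real i * th L - real k * th L) + 1"
  unfolding XX_def inner_v4_3 cos_diff by (simp add: algebra_simps)

lemma cos_dist: "cos (real i * th L - real k * th L) = cos (real (if k \<le> i then i - k else k - i) * th L)"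
proof (cases "k \<le> i")
  case True then show ?thesis by (simp add: of_nat_diff algebra_simps)
next
  case False
  then have "real i * th L - real k * th L = - (real (k - i) * th L)" by (simp add: of_nat_diff algebra_simps)
  then show ?thesis using False by simp
qed

lemma cross_even_odd:
  assumes i: "even i" "i \<le> L" and k: "odd k" "k \<le> L"
  shows "inner_d 3 (XX L j i) (XX L j' k) = 0 \<longleftrightarrow> j = j' \<and> (i = k + 1 \<or> k = i + 1)"
proof -
  define n where "n = (if k \<le> i then i - k else k - i)"
  have nL: "n \<le> L" unfolding n_def using i k by auto
  have cn: "cos (real i * th L - real k * th L) = cos (real n * th L)" unfolding n_def by (rule cos_dist)
  define q where "q = KK L ^ j / KK L ^ j'"
  have q_pos: "0 < q" unfolding q_def using KK_pos by simp
  have r1: "RR L j i = cc L * KK L ^ j" "RR L j' k = cc L / KK L ^ j'" unfolding RR_def using i k by simp_all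
  have RR: "RR L j i * RR L j' k = q / cos (th L)"
  proof -
    have "RR L j i * RR L j' k = (cc L * cc L) * (KK L ^ j / KK L ^ j')" unfolding r1 by simp
    then show ?thesis unfolding cc_sq q_def by simp
  qed
  have "inner_d 3 (XX L j i) (XX L j' k) = 1 - q / cos (th L) * cos (real n * th L)"
    unfolding inner_XX cn RR using i k by simp
  then have iff: "inner_d 3 (XX L j i) (XX L j' k) = 0 \<longleftrightarrow> q * cos (real n * th L) = cos (th L)"
    using cos_th by (auto simp: field_simps)
  show ?thesis
  proof (cases "j = j'")
    case True
    then have "q = 1" unfolding q_def using KK_pos by simp
    then show ?thesis unfolding iff using cosn_eq[OF nL] True unfolding n_def by auto
  next
    case False
    have ne: "q * cos (real n * th L) \<noteq> cos (th L)"
    proof (cases "j' < j")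
      case True
      then have "q = KK L ^ (j - j')" unfolding q_def using KK_pos by (simp add: power_diff)
      also have "\<dots> \<ge> KK L ^ 1" using True KK_gt1 by (intro power_increasing) auto
      finally have qK: "KK L \<le> q" by simp
      show ?thesis
      proof (cases "n = L")
        case True then show ?thesis using cosL cos_th by simp
      next
        case False
        then have "sin (th L) \<le> cos (real n * th L)" using nL by (intro cosn_ge) simp
        then have "KK L * sin (th L) \<le> q * cos (real n * th L)"
          using qK KK_pos sin_th by (intro mult_mono) auto
        then show ?thesis using KK_big by simp
      qed
    next
      case False
      then have lt: "j < j'" using \<open>j \<noteq> j'\<close> by simp
      then have "q = 1 / KK L ^ (j' - j)" unfolding q_def using KK_pos by (simp add: power_diff)
      also have "\<dots> \<le> 1 / KK L ^ 1"
      proof (rule divide_left_mono)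
        show "KK L ^ 1 \<le> KK L ^ (j' - j)" using lt KK_gt1 by (intro power_increasing) auto
        show "0 < KK L ^ (j' - j) * KK L ^ 1" using KK_pos by simp
      qed simp
      finally have q1: "q \<le> 1 / KK L" by simp
      have "q * cos (real n * th L) \<le> q * 1" using q_pos by (intro mult_left_mono) auto
      then show ?thesis using q1 KK_small by simp
    qed
    then show ?thesis unfolding iff using False by simp
  qed
qed

lemma same_parity:
  assumes "even i = even k" "i \<le> L" "k \<le> L"
  shows "inner_d 3 (XX L j i) (XX L j' k) \<noteq> 0"
proof -
  define n where "n = (if k \<le> i then i - k else k - i)"
  have nL: "n \<le> L" unfolding n_def using assms by auto
  have cn: "cos (real i * th L - real k * th L) = cos (real n * th L)" unfolding n_def by (rule cos_dist)
  have s: "(-1::real)^i * (-1)^k = 1" using assms by (cases "even i") (auto simp: power_add[symmetric])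
  have "0 \<le> (RR L j i * RR L j' k) * cos (real n * th L)"
    using RR_pos[of j i] RR_pos[of j' k] cosn_nonneg[OF nL] by (intro mult_nonneg_nonneg) auto
  then show ?thesis unfolding inner_XX cn s by simp
qed

end


definition c5 :: "nat \<Rightarrow> bv \<Rightarrow> nat \<Rightarrow> real" where
  "c5 t u = (case u of Inl p \<Rightarrow> (if p = 0 then v4 1 0 0 0 else v4 0 1 0 0) | Inr (j,i) \<Rightarrow> XX (t - 3) j i)"

lemma rep_c5:
  assumes t: "t \<ge> 5"
  shows "orep (bV t m) (\<lambda>u v. \<not> badj t m u v) 3 (c5 t)"
proof (rule orepI)
  define L where "L = t - 3"
  have L2: "L \<ge> 2" and t2: "t - 2 = L + 1" and t3: "t - 3 = L" unfolding L_def using t by auto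
  fix v assume "v \<in> bV t m"
  then show "\<exists>i<3. c5 t v i \<noteq> 0"
    by (cases rule: bV_cases) (auto simp: c5_def XX_def intro!: v4_ex)
next
  define L where "L = t - 3"
  have L2: "L \<ge> 2" and t2: "t - 2 = L + 1" and t3: "t - 3 = L" unfolding L_def using t by auto
  fix u v assume uv: "u \<in> bV t m" "v \<in> bV t m" "u \<noteq> v"
  have ab: "inner_d 3 (v4 1 0 0 0) (XX L j i) = - ((-1)^i * RR L j i * sin (real i * th L))"
     "inner_d 3 (v4 0 1 0 0) (XX L j i) = (-1)^i * RR L j i * cos (real i * th L)" for j i
    unfolding XX_def inner_v4_3 by simp_all
  have XA: "inner_d 3 (v4 1 0 0 0) (XX L j i) = 0 \<longleftrightarrow> i = 0" if "i \<le> L" for j i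
    unfolding ab using RR_pos[OF L2, of j i] sinn_zero[OF L2 that] by simp
  have XB: "inner_d 3 (v4 0 1 0 0) (XX L j i) = 0 \<longleftrightarrow> i = L" if "i \<le> L" for j i
    unfolding ab using RR_pos[OF L2, of j i] cosn_zero[OF L2 that] by simp
  have XXc: "inner_d 3 (XX L j i) (XX L j' k) = 0 \<longleftrightarrow> j = j' \<and> (i = k + 1 \<or> k = i + 1)"
    if "i \<le> L" "k \<le> L" for j i j' k
  proof (cases "even i = even k")
    case True
    then have "\<not> (i = k + 1 \<or> k = i + 1)" by auto
    then show ?thesis using same_parity[OF L2 True that] by simp
  next
    case False
    show ?thesis
    proof (cases "even i")
      case True
      then show ?thesis using cross_even_odd[OF L2 True that(1) _ that(2)] False by simp
    next
      case False
      then have "even k" using \<open>even i \<noteq> even k\<close> by simp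
      then show ?thesis using cross_even_odd[OF L2 \<open>even k\<close> that(2) False that(1), of j' j] inner_sym
        by (metis)
    qed
  qed
  have cs: "c5 t (Inl 0) = v4 1 0 0 0" "c5 t (Inl 1) = v4 0 1 0 0" "c5 t (Inr (j,i)) = XX L j i" for j i
    unfolding c5_def L_def by simp_all
  have ab0: "inner_d 3 (v4 1 0 0 0) (v4 0 1 0 0) = 0" by (simp add: inner_v4_3)
  show "inner_d 3 (c5 t u) (c5 t v) = 0 \<longleftrightarrow> \<not> \<not> badj t m u v"
  proof (cases rule: bV_cases[OF uv(1)])
    case 1
    then show ?thesis
    proof (cases rule: bV_cases[OF uv(2)])
      case 1 then show ?thesis using uv \<open>u = Inl 0\<close> by simp
    next
      case 2 then show ?thesis using \<open>u = Inl 0\<close> cs ab0 by simp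
    next
      case (3 j i)
      then have "i \<le> L" using t2 by simp
      then show ?thesis using 3 \<open>u = Inl 0\<close> cs XA[of i j] by simp
    qed
  next
    case 2
    then show ?thesis
    proof (cases rule: bV_cases[OF uv(2)])
      case 1 then show ?thesis using \<open>u = Inl 1\<close> cs ab0 inner_sym[of 3 "v4 0 1 0 0"] by simp
    next
      case 2 then show ?thesis using uv \<open>u = Inl 1\<close> by simp
    next
      case (3 j i)
      then have "i \<le> L" using t2 by simp
      then show ?thesis using 3 \<open>u = Inl 1\<close> cs XB[of i j] t3 by simp
    qed
  next
    case (3 j i)
    then have iL: "i \<le> L" using t2 by simp
    show ?thesis
    proof (cases rule: bV_cases[OF uv(2)])
      case 1 then show ?thesis using 3 iL cs XA[of i j] inner_sym[of 3 "XX L j i"] by simp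
    next
      case 2 then show ?thesis using 3 iL cs XB[of i j] inner_sym[of 3 "XX L j i"] t3 by simp
    next
      case (3 j' k)
      then have kL: "k \<le> L" using t2 by simp
      have "inner_d 3 (c5 t u) (c5 t v) = 0 \<longleftrightarrow> j = j' \<and> (i = k + 1 \<or> k = i + 1)"
        using \<open>u = Inr (j,i)\<close> \<open>v = Inr (j',k)\<close> cs XXc[OF iL kL] by simp
      also have "\<dots> \<longleftrightarrow> badj t m u v" using \<open>u = Inr (j,i)\<close> \<open>v = Inr (j',k)\<close> \<open>j < m\<close> iL kL t2 by auto
      finally show ?thesis by simp
    qed
  qed
qed


lemma card_E: "card ({..<m} \<times> {..<t-2}) = m * (t - 2)"
  by (simp add: card_cartesian_product)

lemma rep_C1:
  assumes "t \<ge> 3" "m \<ge> 2"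
  shows "\<exists>\<phi>. orep (bV t m) (badj t m) (m * (t - 2)) \<phi>"
proof -
  have "\<exists>\<phi>. orep (bV t m) (badj t m) (card (({..<m} \<times> {..<t-2}) - {})) \<phi>"
  proof (rule book_rep_tree[where Z="{}" and J="{..<m}" and S="bV t m" and t=t and m=m])
    have "0 \<in> {..<m}" using assms by simp
    then show "{..<m} \<noteq> {}" by blast
  qed (use assms in auto)
  then show ?thesis using card_E by simp
qed

lemma rep_C2:
  assumes "t \<ge> 3" "m \<ge> 2" "j0 < m"
  shows "\<exists>\<phi>. orep (bV t m - {Inr (j0,0)}) (badj t m) (m * (t - 2) - 1) \<phi>"
proof -
  have J: "{..<m} - {j0} \<noteq> {}"
  proof -
    have "(if j0 = 0 then 1 else 0) \<in> {..<m} - {j0}" using assms by auto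
    then show ?thesis by blast
  qed
  have "\<exists>\<phi>. orep (bV t m - {Inr (j0,0)}) (badj t m) (card (({..<m} \<times> {..<t-2}) - {(j0,0)})) \<phi>"
    by (rule book_rep_tree[where Z="{(j0,0)}" and J="{..<m} - {j0}" and S="bV t m - {Inr (j0,0)}" and t=t and m=m])
       (use assms J in auto)
  moreover have "card (({..<m} \<times> {..<t-2}) - {(j0,0)}) = m * (t - 2) - 1"
    using assms by (subst card_Diff_singleton) (auto simp: card_E)
  ultimately show ?thesis by simp
qed

definition rho4 :: "bv \<Rightarrow> bv" where
  "rho4 u = (case u of Inl p \<Rightarrow> Inl (1 - p) | Inr (j,i) \<Rightarrow> Inr (j, 1 - i))"

lemma rep_C2':
  assumes "m \<ge> 2" "j0 < m"
  shows "\<exists>\<phi>. orep (bV 4 m - {Inr (j0,1)}) (badj 4 m) (m * 2 - 1) \<phi>"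
proof -
  obtain \<phi> where \<phi>: "orep (bV 4 m - {Inr (j0,0)}) (badj 4 m) (m * 2 - 1) \<phi>"
    using rep_C2[of 4 m j0] assms by auto
  have r: "rho4 (Inl 0) = Inl 1" "rho4 (Inl 1) = Inl 0" "rho4 (Inr (j,0)) = Inr (j,1)" "rho4 (Inr (j,1)) = Inr (j,0)" "rho4 (Inl (Suc 0)) = Inl 0" "rho4 (Inr (j,Suc 0)) = Inr (j,0)" for j
    unfolding rho4_def by simp_all
  have "orep (bV 4 m - {Inr (j0,1)}) (badj 4 m) (m * 2 - 1) (\<phi> \<circ> rho4)"
  proof (rule orep_embed[OF \<phi>])
    show "inj_on rho4 (bV 4 m - {Inr (j0, 1)})"
    proof (rule inj_onI)
      fix u v assume uv: "u \<in> bV 4 m - {Inr (j0, 1)}" "v \<in> bV 4 m - {Inr (j0, 1)}" "rho4 u = rho4 v"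
      then have "u \<in> bV 4 m" "v \<in> bV 4 m" by auto
      then show "u = v" using uv(3)
        by (cases rule: bV_cases4[OF \<open>u \<in> bV 4 m\<close>]; cases rule: bV_cases4[OF \<open>v \<in> bV 4 m\<close>]) (auto simp: r)
    qed
    show "rho4 ` (bV 4 m - {Inr (j0, 1)}) \<subseteq> bV 4 m - {Inr (j0, 0)}"
    proof
      fix x assume "x \<in> rho4 ` (bV 4 m - {Inr (j0, 1)})"
      then obtain u where u: "u \<in> bV 4 m - {Inr (j0, 1)}" "x = rho4 u" by auto
      then have "u \<in> bV 4 m" by auto
      then show "x \<in> bV 4 m - {Inr (j0, 0)}" using u
        by (cases rule: bV_cases4[OF \<open>u \<in> bV 4 m\<close>]) (auto simp: r)
    qed
    fix u v assume "u \<in> bV 4 m - {Inr (j0, 1)}" "v \<in> bV 4 m - {Inr (j0, 1)}"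
    then have "u \<in> bV 4 m" "v \<in> bV 4 m" by auto
    then show "badj 4 m (rho4 u) (rho4 v) = badj 4 m u v"
      by (cases rule: bV_cases4[OF \<open>u \<in> bV 4 m\<close>]; cases rule: bV_cases4[OF \<open>v \<in> bV 4 m\<close>]) (auto simp: r)
  qed
  then show ?thesis by blast
qed

lemma book_adj_fun: "adj (book_graph t m) = badj t m"
  using book_adj by (intro ext) auto

lemma cc_book: assumes "t \<ge> 3"
  shows "complement_critical (book_graph t m) \<longleftrightarrow> (\<forall>S. S \<noteq> {} \<and> S \<subset> bV t m \<longrightarrow>
     mv S (badj t m) + mv S (\<lambda>u v. \<not> badj t m u v) < mv (bV t m) (badj t m) + mv (bV t m) (\<lambda>u v. \<not> badj t m u v))"
  using cc_iff[OF book_simple[OF assms]] unfolding book_verts book_adj_fun .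

lemma up:
  assumes "orep T A d \<phi>" "S \<subseteq> T" shows "mv S A \<le> d"
  using mv_le orep_mono assms by blast


theorem corollary5p7:
  fixes t m :: nat
  assumes "t \<ge> 3" and "m \<ge> 2"
  shows "complement_critical (book_graph t m) \<longleftrightarrow> (t = 3 \<or> t = 4)"
proof -
  define V where "V = bV t m"
  define A where "A = badj t m"
  define B where "B = (\<lambda>u v. \<not> badj t m u v)"
  obtain \<phi>1 where \<phi>1: "orep V A (m * (t - 2)) \<phi>1" using rep_C1 assms unfolding V_def A_def by blast
  have lowA: "m * (t - 2) \<le> mv V A"
  proof (rule mv_lower[OF \<phi>1])
    fix d \<psi> assume r: "orep V A d \<psi>"
    show "m * (t - 2) \<le> d" using lb_spider[OF assms(1) r[unfolded A_def]] unfolding V_def by blast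
  qed
  have cc: "complement_critical (book_graph t m) \<longleftrightarrow>
     (\<forall>S. S \<noteq> {} \<and> S \<subset> V \<longrightarrow> mv S A + mv S B < mv V A + mv V B)"
    unfolding cc_book[OF assms(1)] V_def A_def B_def ..
  show ?thesis unfolding cc
  proof
    assume cc: "\<forall>S. S \<noteq> {} \<and> S \<subset> V \<longrightarrow> mv S A + mv S B < mv V A + mv V B"
    show "t = 3 \<or> t = 4"
    proof (rule ccontr)
      assume "\<not> (t = 3 \<or> t = 4)"
      then have t5: "t \<ge> 5" using assms by auto
      define S where "S = V - {Inl 0}"
      have i1: "Inl 1 \<in> S" unfolding S_def V_def by simp
      have i0: "Inl 0 \<in> V" "Inl 0 \<notin> S" unfolding S_def V_def by simp_all
      have sv: "S \<subseteq> V" unfolding S_def by blast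
      have "S \<noteq> {}" using i1 by blast
      moreover have "S \<subset> V" using i0 sv by blast
      ultimately have lt: "mv S A + mv S B < mv V A + mv V B" using cc by simp
      have c5: "orep V B 3 (c5 t)" using rep_c5[OF t5] unfolding V_def B_def .
      have "mv V A \<le> m * (t - 2)" using mv_le[OF \<phi>1] .
      moreover have "mv V B \<le> 3" using mv_le[OF c5] .
      moreover have "m * (t - 2) \<le> mv S A"
      proof (rule mv_lower[OF orep_mono[OF \<phi>1]])
        show "S \<subseteq> V" unfolding S_def by blast
        fix d \<psi> assume r: "orep S A d \<psi>"
        show "m * (t - 2) \<le> d" using lb_spider[OF assms(1) r[unfolded A_def]] unfolding S_def V_def by blast
      qed
      moreover have "3 \<le> mv S B"
      proof (rule mv_lower[OF orep_mono[OF c5]])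
        show "S \<subseteq> V" unfolding S_def by blast
        fix d \<psi> assume r: "orep S B d \<psi>"
        have t4: "t \<ge> 4" using t5 by simp
        show "3 \<le> d" using lb_compl_spider[OF t4 assms(2) r[unfolded B_def]] unfolding S_def V_def by blast
      qed
      ultimately show False using lt by linarith
    qed
  next
    assume t34: "t = 3 \<or> t = 4"
    show "\<forall>S. S \<noteq> {} \<and> S \<subset> V \<longrightarrow> mv S A + mv S B < mv V A + mv V B"
    proof (intro allI impI)
      fix S assume S: "S \<noteq> {} \<and> S \<subset> V"
      then have "S \<subseteq> V" "S \<noteq> V" by auto
      then obtain v where v: "v \<in> V" "v \<notin> S" by blast
      have SV: "S \<subseteq> V - {v}" using \<open>S \<subseteq> V\<close> v by blast
      from t34 show "mv S A + mv S B < mv V A + mv V B"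
      proof
        assume t3: "t = 3"
        have "\<exists>\<phi>. orep V B 3 \<phi>" using rep_c3[OF t3, of m] unfolding V_def B_def by blast
        then obtain \<phi>3 where r3: "orep V B 3 \<phi>3" by blast
        have lowB: "3 \<le> mv V B"
        proof (rule mv_lower[OF r3])
          fix d \<psi> assume r: "orep V B d \<psi>"
          have m1: "m \<ge> 1" using assms by simp
          have "{Inl 0, Inl 1, Inr (0,0)} \<subseteq> bV t m" using t3 m1 by simp
          then show "3 \<le> d" using lb_t3[OF t3 m1 r[unfolded B_def V_def]] by blast
        qed
        have "mv S A + mv S B \<le> m + 2"
        proof (cases rule: bV_cases[OF v(1)[unfolded V_def]])
          case 1
          have "mv S A \<le> m * (t - 2)" using up[OF \<phi>1 \<open>S \<subseteq> V\<close>] .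
          moreover have "S \<subseteq> bV t m - {Inl 0}" using SV 1 unfolding V_def by simp
          then have "mv S B \<le> 2" using up[OF rep_c3_del[OF t3, of 0 m]] unfolding B_def by simp
          ultimately show ?thesis using t3 by simp
        next
          case 2
          have "mv S A \<le> m * (t - 2)" using up[OF \<phi>1 \<open>S \<subseteq> V\<close>] .
          moreover have "S \<subseteq> bV t m - {Inl 1}" using SV 2 unfolding V_def by simp
          then have "mv S B \<le> 2" using up[OF rep_c3_del[OF t3, of 1 m]] unfolding B_def by simp
          ultimately show ?thesis using t3 by simp
        next
          case (3 j i)
          then have "i = 0" using t3 by simp
          obtain \<phi>2 where \<phi>2: "orep (bV t m - {Inr (j,0)}) (badj t m) (m * (t - 2) - 1) \<phi>2"
            using rep_C2[of t m j] assms 3 by auto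
          have "S \<subseteq> bV t m - {Inr (j,0)}" using SV 3 \<open>i = 0\<close> unfolding V_def by simp
          then have "mv S A \<le> m * (t - 2) - 1" using up[OF \<phi>2] unfolding A_def by simp
          moreover have "mv S B \<le> 3" using up[OF r3 \<open>S \<subseteq> V\<close>] .
          ultimately show ?thesis using t3 assms by simp
        qed
        then show ?thesis using lowA lowB t3 by simp
      next
        assume t4: "t = 4"
        have r4: "orep V B 4 c4" using rep_c4[OF t4, of m] unfolding V_def B_def .
        have lowB: "4 \<le> mv V B"
        proof (rule mv_lower[OF r4])
          fix d \<psi> assume r: "orep V B d \<psi>"
          show "4 \<le> d" using lb_t4[OF t4 assms(2) r[unfolded B_def]] unfolding V_def by blast
        qed
        have "mv S A + mv S B \<le> 2 * m + 3"
        proof (cases rule: bV_cases[OF v(1)[unfolded V_def]])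
          case 1
          have "mv S A \<le> m * (t - 2)" using up[OF \<phi>1 \<open>S \<subseteq> V\<close>] .
          moreover have "S \<subseteq> bV t m - {Inl 0}" using SV 1 unfolding V_def by simp
          then have "mv S B \<le> 3" using up[OF rep_c4_del[OF t4, of 0 m]] unfolding B_def by simp
          ultimately show ?thesis using t4 by simp
        next
          case 2
          have "mv S A \<le> m * (t - 2)" using up[OF \<phi>1 \<open>S \<subseteq> V\<close>] .
          moreover have "S \<subseteq> bV t m - {Inl 1}" using SV 2 unfolding V_def by simp
          then have "mv S B \<le> 3" using up[OF rep_c4_del[OF t4, of 1 m]] unfolding B_def by simp
          ultimately show ?thesis using t4 by simp
        next
          case (3 j i)
          have "mv S A \<le> m * 2 - 1"
          proof (cases "i = 0")
            case True
            obtain \<phi>2 where \<phi>2: "orep (bV t m - {Inr (j,0)}) (badj t m) (m * (t - 2) - 1) \<phi>2"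
              using rep_C2[of t m j] assms 3 by auto
            have "S \<subseteq> bV t m - {Inr (j,0)}" using SV 3 True unfolding V_def by simp
            then show ?thesis using up[OF \<phi>2] t4 unfolding A_def by simp
          next
            case False
            then have "i = 1" using 3 t4 by simp
            obtain \<phi>2 where \<phi>2: "orep (bV 4 m - {Inr (j,1)}) (badj 4 m) (m * 2 - 1) \<phi>2"
              using rep_C2'[of m j] assms 3 by auto
            have "S \<subseteq> bV 4 m - {Inr (j,1)}" using SV 3 \<open>i = 1\<close> t4 unfolding V_def by simp
            then show ?thesis using up[OF \<phi>2] t4 unfolding A_def by simp
          qed
          moreover have "mv S B \<le> 4" using up[OF r4 \<open>S \<subseteq> V\<close>] .
          ultimately show ?thesis using assms by simp
        qed
        then show ?thesis using lowA lowB t4 by simp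
      qed
    qed
  qed
qed


end
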